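(* Let $A = \{g_n : n \in \mathbb{N}\} \subseteq \mathbb{N}^{\mathbb{N}}$ be an almost disjoint family of functions, let $E \subseteq \mathbb{N}\times\mathbb{N}$, and let $F = \{f_n : n \in \mathbb{N}\} \subseteq \mathbb{N}^{\mathbb{N}}$ be a family not finitely covered by $A$. Then there exists $g : \mathbb{N}\to\mathbb{N}$ that is almost disjoint from every function in $A$, such that $E$ is recursive in $g$, and such that for every $n$ the set $\{k : f_n(k) = g(k)\}$ is infinite.
   Context: Two functions $g_0,g_1\in\mathbb{N}^{\mathbb{N}}$ are almost disjoint if $\{n : g_0(n)=g_1(n)\}$ is finite; an almost disjoint family of functions is a family of pairwise almost disjoint functions. A function $f$ is finitely covered by $A$ if there are $h_0,\dots,h_m\in A$ with $\{k : f(k)\notin\{h_0(k),\dots,h_m(k)\}\}$ finite; $F$ is not finitely covered by $A$ if no member of $F$ is finitely covered by $A$. *)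

theory Defs
  imports Main
begin

definition almost_disjoint :: "(nat \<Rightarrow> nat) \<Rightarrow> (nat \<Rightarrow> nat) \<Rightarrow> bool" where
  "almost_disjoint g0 g1 \<longleftrightarrow> finite {n. g0 n = g1 n}"

definition finitely_covered :: "(nat \<Rightarrow> nat) \<Rightarrow> (nat \<Rightarrow> nat) set \<Rightarrow> bool" where
  "finitely_covered f A \<longleftrightarrow>
     (\<exists>hs. hs \<noteq> [] \<and> set hs \<subseteq> A \<and> finite {k. f k \<notin> (\<lambda>h. h k) ` set hs})"

text \<open>Partial recursive functions relative to an oracle (Kleene's mu-recursive
  functions plus an oracle call), evaluated on argument lists.\<close>
datatype recf =
    Zero
  | Succ
  | Proj nat
  | Comp recf "recf list"
  | Prim recf recf
  | Mn recf
  | Oracle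

inductive eval :: "(nat \<Rightarrow> nat) \<Rightarrow> recf \<Rightarrow> nat list \<Rightarrow> nat \<Rightarrow> bool" for g where
  eval_Zero: "eval g Zero xs 0"
| eval_Succ: "eval g Succ (x # xs) (Suc x)"
| eval_Proj: "i < length xs \<Longrightarrow> eval g (Proj i) xs (xs ! i)"
| eval_Comp: "list_all2 (\<lambda>h y. eval g h xs y) hs ys \<Longrightarrow> eval g f ys z \<Longrightarrow> eval g (Comp f hs) xs z"
| eval_Prim0: "eval g b xs z \<Longrightarrow> eval g (Prim b s) (0 # xs) z"
| eval_PrimS: "eval g (Prim b s) (n # xs) r \<Longrightarrow> eval g s (r # n # xs) z \<Longrightarrow> eval g (Prim b s) (Suc n # xs) z"
| eval_Mn: "eval g f (y # xs) 0 \<Longrightarrow> (\<forall>z<y. \<exists>v. v > 0 \<and> eval g f (z # xs) v) \<Longrightarrow> eval g (Mn f) xs y"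
| eval_Oracle: "eval g Oracle (x # xs) (g x)"

definition recursive_in :: "(nat \<times> nat) set \<Rightarrow> (nat \<Rightarrow> nat) \<Rightarrow> bool" where
  "recursive_in E g \<longleftrightarrow>
     (\<exists>p. \<forall>x y. eval g p [x, y] (if (x, y) \<in> E then 1 else 0))"

end

theory Submission
  imports Defs "HOL-Library.Nat_Bijection" "HOL-Library.Infinite_Set"
begin

definition addP :: recf where "addP = Prim (Proj 0) (Comp Succ [Proj 0])"

lemma ev_add: "eval g addP [a, b] (a + b)"
proof (induction a)
  case 0 show ?case unfolding addP_def by (rule eval_Prim0) (use eval_Proj[of 0 "[b]" g] in simp_all)
next
  case (Suc a)
  have "eval g (Comp Succ [Proj 0]) [a + b, a, b] (Suc (a + b))"
    by (rule eval_Comp[where ys="[a+b]"]) (auto intro: eval_Succ eval_Proj[of 0 "[a + b, a, b]", simplified])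
  then show ?case using Suc unfolding addP_def by (auto intro: eval_PrimS)
qed

definition triP :: recf where "triP = Prim Zero (Comp addP [Comp Succ [Proj 1], Proj 0])"

lemma ev_tri: "eval g triP [n] (triangle n)"
proof (induction n)
  case 0 show ?case unfolding triP_def by (rule eval_Prim0) (simp add: eval_Zero)
next
  case (Suc n)
  have "eval g (Comp addP [Comp Succ [Proj 1], Proj 0]) [triangle n, n] (Suc n + triangle n)"
  proof (rule eval_Comp[where ys="[Suc n, triangle n]"])
    have "eval g (Comp Succ [Proj 1]) [triangle n, n] (Suc n)"
      by (rule eval_Comp[where ys="[n]"]) (auto intro: eval_Succ eval_Proj[of 1 "[triangle n, n]", simplified])
    then show "list_all2 (\<lambda>h y. eval g h [triangle n, n] y) [Comp Succ [Proj 1], Proj 0] [Suc n, triangle n]"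
      using eval_Proj[of 0 "[triangle n, n]" g] by simp
  qed (rule ev_add)
  then show ?case using Suc unfolding triP_def by (auto intro: eval_PrimS simp: add.commute)
qed

definition encP :: recf where "encP = Comp addP [Comp triP [addP], Proj 0]"

lemma ev_enc: "eval g encP [x, y] (prod_encode (x, y))"
proof -
  have "eval g (Comp triP [addP]) [x, y] (triangle (x + y))"
    by (rule eval_Comp[where ys="[x+y]"]) (auto intro: ev_add ev_tri)
  then show ?thesis unfolding encP_def prod_encode_def
    by (intro eval_Comp[where ys="[triangle (x+y), x]"]) (auto intro: ev_add eval_Proj[of 0 "[x,y]", simplified])
qed

definition itP :: recf where "itP = Prim Zero (Comp Oracle [Proj 0])"

lemma ev_it: "eval g itP [t] ((g ^^ t) 0)"
proof (induction t)
  case 0 show ?case unfolding itP_def by (auto intro: eval_Prim0 eval_Zero)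
next
  case (Suc t)
  have "eval g (Comp Oracle [Proj 0]) [(g ^^ t) 0, t] (g ((g ^^ t) 0))"
    by (rule eval_Comp[where ys="[(g ^^ t) 0]"]) (auto intro: eval_Oracle eval_Proj[of 0 "[(g ^^ t) 0, t]", simplified])
  then show ?case using Suc unfolding itP_def by (auto intro: eval_PrimS)
qed

definition negP :: recf where "negP = Prim (Comp Succ [Zero]) Zero"

lemma ev_neg: "eval g negP [n] (if n = 0 then 1 else 0)"
proof (induction n)
  case 0
  have "eval g (Comp Succ [Zero]) [] 1"
    by (rule eval_Comp[where ys="[0]"]) (auto intro: eval_Zero eval_Succ[of g 0 "[]", simplified])
  then show ?case unfolding negP_def by (auto intro: eval_Prim0)
next
  case (Suc m)
  then show ?case unfolding negP_def by (auto intro: eval_PrimS eval_Zero)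
qed

definition parP :: recf where "parP = Prim Zero (Comp negP [Proj 0])"

lemma ev_par: "eval g parP [n] (n mod 2)"
proof (induction n)
  case 0 show ?case unfolding parP_def by (auto intro: eval_Prim0 eval_Zero)
next
  case (Suc n)
  have "eval g (Comp negP [Proj 0]) [n mod 2, n] (if n mod 2 = 0 then 1 else 0)"
    by (rule eval_Comp[where ys="[n mod 2]"]) (use ev_neg[of g "n mod 2"] eval_Proj[of 0 "[n mod 2, n]" g] in simp_all)
  moreover have "(if n mod 2 = 0 then 1 else 0) = Suc n mod 2" by presburger
  ultimately show ?case using Suc unfolding parP_def by (auto intro: eval_PrimS)
qed

definition mainP :: recf where "mainP = Comp parP [Comp itP [Comp Succ [encP]]]"

lemma ev_main: "eval g mainP [x, y] (((g ^^ Suc (prod_encode (x, y))) 0) mod 2)"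
proof -
  have "eval g (Comp Succ [encP]) [x, y] (Suc (prod_encode (x, y)))"
    by (rule eval_Comp[where ys="[prod_encode (x, y)]"]) (auto intro: ev_enc eval_Succ)
  then have "eval g (Comp itP [Comp Succ [encP]]) [x, y] ((g ^^ Suc (prod_encode (x, y))) 0)"
    by (intro eval_Comp[where ys="[Suc (prod_encode (x, y))]"]) (use ev_it[of g "Suc (prod_encode (x, y))"] in simp_all)
  then show ?thesis unfolding mainP_def
    by (intro eval_Comp[where ys="[(g ^^ Suc (prod_encode (x, y))) 0]"]) (auto intro: ev_par)
qed

lemma triangle_ge: "m \<le> triangle m"
  by (induction m) auto

lemma enc_ge: "B \<le> prod_encode (n, B)"
  using triangle_ge[of "n + B"] by (simp add: prod_encode_def)

context
  fixes G F :: "nat \<Rightarrow> nat \<Rightarrow> nat" and E :: "(nat \<times> nat) set"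
  assumes NFC: "\<forall>n. \<not> finitely_covered (F n) (range G)"
begin

definition kpos :: "nat \<Rightarrow> nat \<Rightarrow> nat" where
  "kpos s q = (LEAST k. q < k \<and> (\<forall>i\<le>s. F (fst (prod_decode s)) k \<noteq> G i k))"

lemma kpos_ex: "\<exists>k. q < k \<and> (\<forall>i\<le>s. F n k \<noteq> G i k)"
proof -
  let ?hs = "map G [0..<Suc s]"
  have "\<not> finitely_covered (F n) (range G)" using NFC by blast
  moreover have "?hs \<noteq> []" "set ?hs \<subseteq> range G" by auto
  ultimately have "infinite {k. F n k \<notin> (\<lambda>h. h k) ` set ?hs}"
    unfolding finitely_covered_def by blast
  then obtain k where "k > q" "F n k \<notin> (\<lambda>h. h k) ` set ?hs"
    unfolding infinite_nat_iff_unbounded by blast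
  then show ?thesis by (intro exI[of _ k]) (auto simp: image_iff)
qed

lemma kpos: "q < kpos s q \<and> (\<forall>i\<le>s. F (fst (prod_decode s)) (kpos s q) \<noteq> G i (kpos s q))"
  unfolding kpos_def by (rule LeastI_ex) (rule kpos_ex)

definition nextp :: "nat \<Rightarrow> nat \<Rightarrow> nat" where
  "nextp s q = 2 * Suc (kpos s q + (\<Sum>i\<le>s. G i q)) + (if prod_decode s \<in> E then 1 else 0)"

primrec pp :: "nat \<Rightarrow> nat" where
  "pp 0 = 0"
| "pp (Suc s) = nextp s (pp s)"

lemma kpos_lt1: "pp s < kpos s (pp s)" using kpos by blast

lemma kpos_lt2: "kpos s (pp s) < pp (Suc s)" by (simp add: nextp_def)

lemma pp_mono: "strict_mono pp"
  unfolding strict_mono_Suc_iff using kpos_lt1 kpos_lt2 less_trans by blast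

lemma pp_ge: "s \<le> pp s" using strict_mono_imp_increasing[OF pp_mono] by blast

definition idx :: "nat \<Rightarrow> nat" where "idx k = (LEAST s. k < pp (Suc s))"

lemma idx1: "k < pp (Suc (idx k))"
  unfolding idx_def by (rule LeastI[of _ k]) (use pp_ge[of "Suc k"] in simp)

lemma idx2: "pp (idx k) \<le> k"
proof (cases "idx k")
  case (Suc t)
  then have "\<not> k < pp (Suc t)" using not_less_Least[of t "\<lambda>s. k < pp (Suc s)"] unfolding idx_def by simp
  then show ?thesis using Suc by simp
qed simp

lemma idx_eq: assumes "pp s \<le> k" "k < pp (Suc s)" shows "idx k = s"
proof (rule ccontr)
  assume "idx k \<noteq> s"
  then consider "idx k < s" | "Suc s \<le> idx k" by linarith
  then show False
  proof cases
    case 1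
    then have "pp (Suc (idx k)) \<le> pp s" using strict_mono_less_eq[OF pp_mono, of "Suc (idx k)" s] by (simp del: pp.simps)
    then show False using idx1[of k] assms by simp
  next
    case 2
    then have "pp (Suc s) \<le> pp (idx k)" using strict_mono_less_eq[OF pp_mono, of "Suc s" "idx k"] by (simp del: pp.simps)
    then show False using idx2[of k] assms by simp
  qed
qed

definition gg :: "nat \<Rightarrow> nat" where
  "gg k = (let s = idx k in if k = pp s then pp (Suc s)
     else if k = kpos s (pp s) then F (fst (prod_decode s)) k else Suc (\<Sum>i\<le>s. G i k))"

lemma idx_pp: "idx (pp s) = s"
  by (rule idx_eq) (use kpos_lt1[of s] kpos_lt2[of s] in auto)

lemma gg_pp: "gg (pp s) = pp (Suc s)"
  unfolding gg_def Let_def idx_pp by simp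

lemma gg_avoid: assumes "i \<le> idx k" shows "gg k \<noteq> G i k"
proof -
  let ?s = "idx k"
  have le: "G i q \<le> (\<Sum>i\<le>?s. G i q)" for q
    using assms by (intro member_le_sum) auto
  show ?thesis
  proof (cases "k = pp ?s")
    case True
    then have "gg k = nextp ?s k" unfolding gg_def Let_def by (metis pp.simps(2))
    then show ?thesis using le[of k] unfolding nextp_def by auto
  next
    case False
    show ?thesis
    proof (cases "k = kpos ?s (pp ?s)")
      case True
      then have "gg k = F (fst (prod_decode ?s)) k" using False unfolding gg_def Let_def by simp
      then show ?thesis using kpos[of "pp ?s" ?s] True assms by metis
    next
      case False2: False
      then have "gg k = Suc (\<Sum>i\<le>?s. G i k)" using False unfolding gg_def Let_def by simp
      then show ?thesis using le[of k] by auto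
    qed
  qed
qed

lemma gg_ad: "almost_disjoint gg (G n)"
proof -
  have "{k. gg k = G n k} \<subseteq> {..<pp n}"
  proof
    fix k assume "k \<in> {k. gg k = G n k}"
    then have "idx k < n" using gg_avoid[of n k] by (cases "n \<le> idx k") auto
    then have "pp (Suc (idx k)) \<le> pp n" using strict_mono_less_eq[OF pp_mono, of "Suc (idx k)" n] by (simp del: pp.simps)
    then show "k \<in> {..<pp n}" using idx1[of k] by simp
  qed
  then show ?thesis unfolding almost_disjoint_def using finite_subset by blast
qed

lemma gg_pow: "(gg ^^ t) 0 = pp t"
  by (induction t) (auto simp del: pp.simps simp: gg_pp pp.simps(1))

lemma gg_rec: "recursive_in E gg"
  unfolding recursive_in_def
proof (intro exI allI)
  fix x y
  have "pp (Suc (prod_encode (x, y))) mod 2 = (if (x, y) \<in> E then 1 else 0)"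
    by (simp add: nextp_def)
  then show "eval gg mainP [x, y] (if (x, y) \<in> E then 1 else 0)"
    using ev_main[of gg x y] by (simp only: gg_pow)
qed

lemma gg_inf: "infinite {k. F n k = gg k}"
  unfolding infinite_nat_iff_unbounded
proof
  fix B
  let ?s = "prod_encode (n, B)"
  let ?k = "kpos ?s (pp ?s)"
  have "idx ?k = ?s" using kpos_lt1[of ?s] kpos_lt2[of ?s] by (intro idx_eq) auto
  moreover have "?k \<noteq> pp ?s" using kpos_lt1[of ?s] by simp
  ultimately have "gg ?k = F n ?k" unfolding gg_def Let_def by simp
  moreover have "?k > B" using kpos_lt1[of ?s] pp_ge[of ?s] enc_ge[of B n] by linarith
  ultimately show "\<exists>k>B. k \<in> {k. F n k = gg k}" by auto
qed

end

theorem mainTheorem7: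
  fixes G :: "nat \<Rightarrow> nat \<Rightarrow> nat"
    and F :: "nat \<Rightarrow> nat \<Rightarrow> nat"
    and E :: "(nat \<times> nat) set"
  assumes AD: "\<forall>n m. G n \<noteq> G m \<longrightarrow> almost_disjoint (G n) (G m)"
    and NFC: "\<forall>n. \<not> finitely_covered (F n) (range G)"
  shows "\<exists>g :: nat \<Rightarrow> nat. (\<forall>n. almost_disjoint g (G n)) \<and> recursive_in E g
           \<and> (\<forall>n. infinite {k. F n k = g k})"
  using gg_ad[OF NFC] gg_rec[OF NFC] gg_inf[OF NFC] by blast

end
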